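(* Consider the ESBAS meta-algorithm $\sigma^{\textsc{esbas}}$ described in the context, run with a stochastic $K$-armed bandit $\Xi$ that guarantees a pseudo-regret of order $\mathcal{O}(\log(T)/\Delta^\dag_\beta)$. If $\Delta_\beta^\dag\in\Theta(1)$ (as $\beta\to\infty$), then $$\overline{\rho}_{ss}^{\sigma^{\textsc{esbas}}}(T)\in\mathcal{O}\left(\frac{\log^2(T)}{\Delta_\infty^\dag}\right),$$ where $\Delta_\infty^\dag=\mu_\infty^*-\mu_\infty^\dag>0$ is the limit of $\Delta^\dag_\beta$ as $\beta\to\infty$.
   Context: Setting. An agent interacts episodically with a fixed stochastic environment (actions in $\mathcal{A}$, observations in $\Omega$, rewards in $[R_{min},R_{max}]$). A trajectory is a finite sequence of (observation, action, reward) triples, with return $\mu(\varepsilon)=\sum_{t=1}^{|\varepsilon|}\gamma^{t-1}r(t)$ for a discount $0\le\gamma<1$. An RL algorithm maps a trajectory set $\mathcal{D}$ to a policy $\pi^\alpha_{\mathcal{D}}$; $\mathbb{E}\mu^\alpha_{\mathcal{D}}$ is the expected return of a trajectory generated by $\pi^\alpha_{\mathcal{D}}$. A portfolio is $\mathcal{P}=\{\alpha^k\}_{k=1}^K$. A meta-algorithm $\sigma$ selects at each meta-time $\tau=1,2,\dots$ an algorithm $\sigma(\tau)\in\mathcal{P}$; a trajectory is generated with the policy currently associated with $\sigma(\tau)$ and added to the shared trajectory set ($\mathcal{D}_0=\emptyset$, $\mathcal{D}_\tau=\mathcal{D}_{\tau-1}\cup\{\varepsilon_\tau\}$); $\mathcal{D}^\sigma_\tau$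 and $\mathbb{E}_\sigma$ denote the resulting random trajectory set and expectation. ESBAS: epoch $\beta=0,1,\dots$ consists of meta-times $2^\beta,\dots,2^{\beta+1}-1$. At the start of epoch $\beta$ each algorithm computes $\pi^\alpha_{\mathcal{D}_{2^\beta-1}}$, frozen for the epoch, and a fresh instance of $\Xi$ (arms = algorithms) is started; during the epoch $\Xi$ chooses which algorithm's frozen policy generates each trajectory, receiving its return as reward. Short-sighted pseudo-regret: $\overline{\rho}^\sigma_{ss}(T)=\mathbb{E}_\sigma\left[\sum_{\tau=1}^T\left(\max_{\alpha\in\mathcal{P}}\mathbb{E}\mu^\alpha_{\mathcal{D}^\sigma_{\tau-1}}-\mathbb{E}\mu^{\sigma(\tau)}_{\mathcal{D}^\sigma_{\tau-1}}\right)\right]$. Gaps: $\Delta^\alpha_\beta=\max_{\alpha'}\mathbb{E}\mu^{\alpha'}_{\mathcal{D}^{\sigma^{\textsc{esbas}}}_{2^\beta-1}}-\mathbb{E}\mu^{\alpha}_{\mathcal{D}^{\sigma^{\textsc{esbas}}}_{2^\beta-1}}$; $\Delta^\dag_\beta$ is the smallest non-null gap at epoch $\beta$. $\mu^*_\infty$ denotes the asymptotic performance of the best algorithm and $\mu^\dag_\infty$ that of the second best. *)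

theory Defs
  imports "HOL-Probability.Probability" "HOL-Library.Discrete_Functions" "HOL-Library.Landau_Symbols"
begin

type_synonym ('o, 'a) traj = "('o \<times> 'a \<times> real) list"

(* discounted return  mu(eps) = sum_{t=1}^{|eps|} gamma^(t-1) r(t)  (0-based index here) *)
definition ret :: "real \<Rightarrow> ('o, 'a) traj \<Rightarrow> real" where
  "ret \<gamma> \<epsilon> = (\<Sum>t<length \<epsilon>. \<gamma> ^ t * snd (snd (\<epsilon> ! t)))"

(* The fixed stochastic environment is given by the distribution env pol of the trajectory
   generated by policy pol.  E mu of a policy: *)
definition exp_ret :: "('p \<Rightarrow> ('o, 'a) traj pmf) \<Rightarrow> real \<Rightarrow> 'p \<Rightarrow> real" where
  "exp_ret env \<gamma> pol = measure_pmf.expectation (env pol) (ret \<gamma>)"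

(* A bandit algorithm maps its history of (arm, reward) pairs to a distribution over arms;
   nu a is the reward distribution of arm a. *)
primrec bandit_run ::
  "((nat \<times> real) list \<Rightarrow> nat pmf) \<Rightarrow> (nat \<Rightarrow> real pmf) \<Rightarrow> nat \<Rightarrow> (nat \<times> real) list pmf" where
  "bandit_run \<Xi> \<nu> 0 = return_pmf []"
| "bandit_run \<Xi> \<nu> (Suc n) =
     bind_pmf (bandit_run \<Xi> \<nu> n) (\<lambda>h. bind_pmf (\<Xi> h) (\<lambda>a. map_pmf (\<lambda>r. h @ [(a, r)]) (\<nu> a)))"

definition arm_mean :: "(nat \<Rightarrow> real pmf) \<Rightarrow> nat \<Rightarrow> real" where
  "arm_mean \<nu> a = measure_pmf.expectation (\<nu> a) (\<lambda>r. r)"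

definition arm_gap :: "nat \<Rightarrow> (nat \<Rightarrow> real pmf) \<Rightarrow> nat \<Rightarrow> real" where
  "arm_gap K \<nu> a = (MAX b\<in>{..<K}. arm_mean \<nu> b) - arm_mean \<nu> a"

definition arm_gap_dagger :: "nat \<Rightarrow> (nat \<Rightarrow> real pmf) \<Rightarrow> real" where
  "arm_gap_dagger K \<nu> = Min {arm_gap K \<nu> b | b. b < K \<and> arm_gap K \<nu> b \<noteq> 0}"

definition bandit_pseudo_regret ::
  "((nat \<times> real) list \<Rightarrow> nat pmf) \<Rightarrow> nat \<Rightarrow> (nat \<Rightarrow> real pmf) \<Rightarrow> nat \<Rightarrow> real" where
  "bandit_pseudo_regret \<Xi> K \<nu> T =
     measure_pmf.expectation (bandit_run \<Xi> \<nu> T) (\<lambda>h. \<Sum>(a, r)\<leftarrow>h. arm_gap K \<nu> a)"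

definition log_regret_bandit :: "nat \<Rightarrow> real \<Rightarrow> ((nat \<times> real) list \<Rightarrow> nat pmf) \<Rightarrow> bool" where
  "log_regret_bandit K B \<Xi> \<longleftrightarrow>
     (\<forall>h. set_pmf (\<Xi> h) \<subseteq> {..<K}) \<and>
     (\<exists>C. \<forall>\<nu>. (\<forall>a<K. set_pmf (\<nu> a) \<subseteq> {-B..B}) \<longrightarrow> (\<exists>a<K. arm_gap K \<nu> a \<noteq> 0) \<longrightarrow>
        (\<forall>T\<ge>2. bandit_pseudo_regret \<Xi> K \<nu> T \<le> C * ln (real T) / arm_gap_dagger K \<nu>))"

(* Meta-time tau >= 1 lies in epoch beta = floor_log tau; the policies of that epoch are
   trained on D_{2^beta - 1}, i.e. on the first  epoch_start tau  trajectories. *)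
definition epoch_start :: "nat \<Rightarrow> nat" where
  "epoch_start \<tau> = 2 ^ floor_log \<tau> - 1"

(* A portfolio of K algorithms: P k maps the trajectory set (chronological list) to a policy.
   The ESBAS history H records (selected algorithm, generated trajectory) per meta-time. *)
definition esbas_step ::
  "('p \<Rightarrow> ('o, 'a) traj pmf) \<Rightarrow> real \<Rightarrow> (nat \<Rightarrow> ('o, 'a) traj list \<Rightarrow> 'p)
   \<Rightarrow> ((nat \<times> real) list \<Rightarrow> nat pmf) \<Rightarrow> (nat \<times> ('o, 'a) traj) list
   \<Rightarrow> (nat \<times> ('o, 'a) traj) list pmf" where
  "esbas_step env \<gamma> P \<Xi> H =
     (let s = epoch_start (Suc (length H));
          D = map snd (take s H);
          hb = map (\<lambda>(a, e). (a, ret \<gamma> e)) (drop s H)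
      in bind_pmf (\<Xi> hb) (\<lambda>a. map_pmf (\<lambda>e. H @ [(a, e)]) (env (P a D))))"

primrec esbas_run ::
  "('p \<Rightarrow> ('o, 'a) traj pmf) \<Rightarrow> real \<Rightarrow> (nat \<Rightarrow> ('o, 'a) traj list \<Rightarrow> 'p)
   \<Rightarrow> ((nat \<times> real) list \<Rightarrow> nat pmf) \<Rightarrow> nat \<Rightarrow> (nat \<times> ('o, 'a) traj) list pmf" where
  "esbas_run env \<gamma> P \<Xi> 0 = return_pmf []"
| "esbas_run env \<gamma> P \<Xi> (Suc n) = bind_pmf (esbas_run env \<gamma> P \<Xi> n) (esbas_step env \<gamma> P \<Xi>)"

definition esbas_data where
  "esbas_data env \<gamma> P \<Xi> n = map_pmf (map snd) (esbas_run env \<gamma> P \<Xi> n)"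

definition alg_gap where
  "alg_gap env \<gamma> P K D \<alpha> = (MAX b\<in>{..<K}. exp_ret env \<gamma> (P b D)) - exp_ret env \<gamma> (P \<alpha> D)"

definition alg_gap_dagger where
  "alg_gap_dagger env \<gamma> P K D = Min {alg_gap env \<gamma> P K D b | b. b < K \<and> alg_gap env \<gamma> P K D b \<noteq> 0}"

(* short-sighted pseudo-regret of ESBAS; the policy associated with each algorithm at
   meta-time tau is the one frozen at the start of the current epoch. *)
definition esbas_ss_regret where
  "esbas_ss_regret env \<gamma> P \<Xi> K T =
     measure_pmf.expectation (esbas_run env \<gamma> P \<Xi> T)
       (\<lambda>H. \<Sum>\<tau>\<in>{1..T}. alg_gap env \<gamma> P K (map snd (take (epoch_start \<tau>) H)) (fst (H ! (\<tau> - 1))))"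

end

theory Submission
  imports Defs
begin

primrec esbas_iter where
  "esbas_iter env \<gamma> P \<Xi> 0 H = return_pmf H"
| "esbas_iter env \<gamma> P \<Xi> (Suc n) H = bind_pmf (esbas_iter env \<gamma> P \<Xi> n H) (esbas_step env \<gamma> P \<Xi>)"

lemma esbas_run_iter: "esbas_run env \<gamma> P \<Xi> n = esbas_iter env \<gamma> P \<Xi> n []"
  by (induction n) auto

lemma esbas_iter_add:
  "esbas_iter env \<gamma> P \<Xi> (a + b) H = bind_pmf (esbas_iter env \<gamma> P \<Xi> a H) (esbas_iter env \<gamma> P \<Xi> b)"
  by (induction b) (auto simp: bind_return_pmf' bind_assoc_pmf)

lemma esbas_run_add:
  "esbas_run env \<gamma> P \<Xi> (a + b) = bind_pmf (esbas_run env \<gamma> P \<Xi> a) (esbas_iter env \<gamma> P \<Xi> b)"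
  by (simp add: esbas_run_iter esbas_iter_add)

lemma set_esbas_step: "H' \<in> set_pmf (esbas_step env \<gamma> P \<Xi> H) \<Longrightarrow> \<exists>x. H' = H @ [x]"
  by (auto simp: esbas_step_def Let_def)

lemma set_esbas_iter:
  "H' \<in> set_pmf (esbas_iter env \<gamma> P \<Xi> n H) \<Longrightarrow> \<exists>X. H' = H @ X \<and> length X = n"
proof (induction n arbitrary: H')
  case 0 then show ?case by simp
next
  case (Suc n)
  then obtain H1 where H1: "H1 \<in> set_pmf (esbas_iter env \<gamma> P \<Xi> n H)" "H' \<in> set_pmf (esbas_step env \<gamma> P \<Xi> H1)"
    by auto
  from Suc.IH[OF H1(1)] obtain X where "H1 = H @ X" "length X = n" by auto
  moreover from set_esbas_step[OF H1(2)] obtain x where "H' = H1 @ [x]" by auto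
  ultimately show ?case by (intro exI[of _ "X @ [x]"]) auto
qed

lemma set_esbas_run: "H \<in> set_pmf (esbas_run env \<gamma> P \<Xi> n) \<Longrightarrow> length H = n"
  using set_esbas_iter[of H env \<gamma> P \<Xi> n "[]"] by (auto simp: esbas_run_iter)

lemma expectation_bind_pmf_bdd:
  fixes f :: "'b \<Rightarrow> real"
  assumes "\<And>x. \<bar>f x\<bar> \<le> B"
  shows "measure_pmf.expectation (bind_pmf M N) f =
         measure_pmf.expectation M (\<lambda>x. measure_pmf.expectation (N x) f)"
  unfolding measure_pmf_bind
  by (rule integral_bind[where K="count_space UNIV" and B=B and B'=1])
     (auto simp: assms measure_pmf.emeasure_space_1 prob_space_imp_subprob_space
       measure_pmf.prob_space_axioms measure_pmf.finite_measure_axioms measure_pmf_in_subprob_algebra intro!: measurable_pmf_measure1)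

lemma integrable_bdd:
  fixes f :: "'b \<Rightarrow> real"
  assumes "\<And>x. \<bar>f x\<bar> \<le> B"
  shows "integrable (measure_pmf M) f"
  by (rule measure_pmf.integrable_const_bound[where B=B]) (auto simp: assms)

lemma exp_bounds:
  fixes f :: "'b \<Rightarrow> real"
  assumes "\<And>x. x \<in> set_pmf M \<Longrightarrow> a \<le> f x \<and> f x \<le> b"
  shows "a \<le> measure_pmf.expectation M f \<and> measure_pmf.expectation M f \<le> b"
proof -
  have int: "integrable (measure_pmf M) f"
    by (rule measure_pmf.integrable_const_bound[where B="max \<bar>a\<bar> \<bar>b\<bar>"])
       (auto simp: AE_measure_pmf_iff dest!: assms)
  show ?thesis
    using measure_pmf.integral_le_const[OF int, of b] measure_pmf.integral_ge_const[OF int, of a]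
    by (auto simp: AE_measure_pmf_iff assms)
qed

lemma ret_bound:
  assumes "0 \<le> \<gamma>" "\<gamma> < 1" "0 \<le> M" "\<And>o' a r. (o', a, r) \<in> set \<epsilon> \<Longrightarrow> \<bar>r\<bar> \<le> M"
  shows "\<bar>ret \<gamma> \<epsilon>\<bar> \<le> M / (1 - \<gamma>)"
proof -
  have "\<bar>ret \<gamma> \<epsilon>\<bar> \<le> (\<Sum>t<length \<epsilon>. \<bar>\<gamma> ^ t * snd (snd (\<epsilon> ! t))\<bar>)"
    unfolding ret_def by (rule sum_abs)
  also have "\<dots> \<le> (\<Sum>t<length \<epsilon>. \<gamma> ^ t * M)"
  proof (rule sum_mono)
    fix t assume "t \<in> {..<length \<epsilon>}"
    then have "\<epsilon> ! t \<in> set \<epsilon>" by auto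
    then have "\<bar>snd (snd (\<epsilon> ! t))\<bar> \<le> M" using assms(4)
      by (metis prod.collapse)
    then show "\<bar>\<gamma> ^ t * snd (snd (\<epsilon> ! t))\<bar> \<le> \<gamma> ^ t * M"
      using assms(1) by (simp add: abs_mult mult_left_mono)
  qed
  also have "\<dots> = M * ((1 - \<gamma> ^ length \<epsilon>) / (1 - \<gamma>))"
    using assms(2) by (simp add: sum_distrib_right[symmetric] sum_gp_strict)
  also have "\<dots> \<le> M / (1 - \<gamma>)"
  proof (cases "\<epsilon> = []")
    case True then show ?thesis using assms by simp
  next
    case False
    have "(1 - \<gamma> ^ length \<epsilon>) / (1 - \<gamma>) \<le> 1 / (1 - \<gamma>)"
      using assms(1,2) by (intro divide_right_mono) auto
    then show ?thesis using assms(3) by (metis mult_left_mono times_divide_eq_right mult_1_right)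
  qed
  finally show ?thesis .
qed

lemma Max_abs_bound:
  fixes g :: "nat \<Rightarrow> real"
  assumes "K \<ge> 1" "\<And>b. \<bar>g b\<bar> \<le> B"
  shows "\<bar>(MAX b\<in>{..<K}. g b)\<bar> \<le> B" "\<And>a. a < K \<Longrightarrow> g a \<le> (MAX b\<in>{..<K}. g b)"
proof -
  have "0 \<in> {..<K}" using assms(1) by auto
  then have "(MAX b\<in>{..<K}. g b) \<in> g ` {..<K}" by (intro Max_in) auto
  then show "\<bar>(MAX b\<in>{..<K}. g b)\<bar> \<le> B" using assms(2) by auto
  show "\<And>a. a < K \<Longrightarrow> g a \<le> (MAX b\<in>{..<K}. g b)" by (intro Max_ge) auto
qed

lemma set_bandit_run:
  assumes "\<And>h. set_pmf (\<Xi> h) \<subseteq> {..<K}"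
  shows "h \<in> set_pmf (bandit_run \<Xi> \<nu> n) \<Longrightarrow> length h = n \<and> (\<forall>x\<in>set h. fst x < K)"
proof (induction n arbitrary: h)
  case 0 then show ?case by simp
next
  case (Suc n)
  then show ?case using assms by fastforce
qed

lemma sum_list_bounds:
  fixes f :: "'b \<Rightarrow> real"
  assumes "\<And>x. x \<in> set xs \<Longrightarrow> 0 \<le> f x \<and> f x \<le> G"
  shows "0 \<le> sum_list (map f xs) \<and> sum_list (map f xs) \<le> real (length xs) * G"
  using assms by (induction xs) (auto simp: algebra_simps, fastforce+)

lemma bpr_bounds:
  assumes "\<And>h. set_pmf (\<Xi> h) \<subseteq> {..<K}" "\<And>a. a < K \<Longrightarrow> 0 \<le> arm_gap K \<nu> a \<and> arm_gap K \<nu> a \<le> G"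
  shows "0 \<le> bandit_pseudo_regret \<Xi> K \<nu> n \<and> bandit_pseudo_regret \<Xi> K \<nu> n \<le> real n * G"
  unfolding bandit_pseudo_regret_def
proof (rule exp_bounds)
  fix h assume "h \<in> set_pmf (bandit_run \<Xi> \<nu> n)"
  from set_bandit_run[OF assms(1) this] have h: "length h = n" "\<forall>x\<in>set h. fst x < K" by auto
  have "0 \<le> sum_list (map (\<lambda>x. arm_gap K \<nu> (fst x)) h) \<and> sum_list (map (\<lambda>x. arm_gap K \<nu> (fst x)) h) \<le> real (length h) * G"
    by (rule sum_list_bounds) (use h assms(2) in auto)
  moreover have eqf: "(\<lambda>(a, r). arm_gap K \<nu> a) = (\<lambda>x. arm_gap K \<nu> (fst x))" by auto
  ultimately show "0 \<le> (\<Sum>(a, r)\<leftarrow>h. arm_gap K \<nu> a) \<and> (\<Sum>(a, r)\<leftarrow>h. arm_gap K \<nu> a) \<le> real n * G"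
    using h unfolding eqf by simp
qed

lemma bpr_zero:
  assumes "\<And>h. set_pmf (\<Xi> h) \<subseteq> {..<K}" "\<And>a. a < K \<Longrightarrow> arm_gap K \<nu> a = 0"
  shows "bandit_pseudo_regret \<Xi> K \<nu> n = 0"
proof -
  have "0 \<le> bandit_pseudo_regret \<Xi> K \<nu> n \<and> bandit_pseudo_regret \<Xi> K \<nu> n \<le> real n * 0"
    by (rule bpr_bounds) (use assms in auto)
  then show ?thesis by simp
qed

lemma aux_lt: "(n::nat) \<le> p \<Longrightarrow> \<tau> \<le> p + n - Suc 0 \<Longrightarrow> 0 < p \<Longrightarrow> \<tau> < 2 * p" by linarith

lemma epoch_start_eq:
  assumes "2 ^ \<beta> \<le> \<tau>" "\<tau> < 2 * 2 ^ \<beta>"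
  shows "epoch_start \<tau> = 2 ^ \<beta> - 1"
proof -
  have "(0::nat) < 2 ^ \<beta>" by simp
  then have "floor_log \<tau> = \<beta>" using assms by (intro floor_log_eqI) auto
  then show ?thesis by (simp add: epoch_start_def)
qed

lemma corr:
  fixes H0 :: "(nat \<times> ('o, 'a) traj) list"
  assumes len: "length H0 = 2 ^ \<beta> - 1" and n: "n \<le> 2 ^ \<beta>"
  shows "map_pmf (\<lambda>H. map (\<lambda>(a, e). (a, ret \<gamma> e)) (drop (2 ^ \<beta> - 1) H)) (esbas_iter env \<gamma> P \<Xi> n H0)
       = bandit_run \<Xi> (\<lambda>a. map_pmf (ret \<gamma>) (env (P a (map snd H0)))) n"
  using n
proof (induction n)
  case 0
  then show ?case using len by simp
next
  case (Suc n)
  define s where "s = (2::nat) ^ \<beta> - 1"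
  define \<Phi> where "\<Phi> = (\<lambda>H :: (nat \<times> ('o, 'a) traj) list. map (\<lambda>(a, e). (a, ret \<gamma> e)) (drop s H))"
  define \<nu> where "\<nu> = (\<lambda>a. map_pmf (ret \<gamma>) (env (P a (map snd H0))))"
  define G where "G = (\<lambda>h. bind_pmf (\<Xi> h) (\<lambda>a. map_pmf (\<lambda>r. h @ [(a, r)]) (\<nu> a)))"
  have IH: "map_pmf \<Phi> (esbas_iter env \<gamma> P \<Xi> n H0) = bandit_run \<Xi> \<nu> n"
    using Suc by (simp add: \<Phi>_def \<nu>_def s_def)
  have pos: "(1::nat) \<le> 2 ^ \<beta>" by simp
  have stepeq: "map_pmf \<Phi> (esbas_step env \<gamma> P \<Xi> H) = G (\<Phi> H)"
    if H: "H \<in> set_pmf (esbas_iter env \<gamma> P \<Xi> n H0)" for H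
  proof -
    obtain X where X: "H = H0 @ X" "length X = n" using set_esbas_iter[OF H] by auto
    have es: "epoch_start (Suc (length H)) = s"
      unfolding s_def using X len Suc.prems pos by (intro epoch_start_eq) auto
    have tk: "take s H = H0" "drop s H = X" using X len by (auto simp: s_def)
    have sl: "s - length H = 0" using X len by (auto simp: s_def)
    have phi: "\<Phi> (H @ [(a, e)]) = \<Phi> H @ [(a, ret \<gamma> e)]" for a e
      using X len by (simp add: \<Phi>_def s_def)
    show ?thesis
      unfolding esbas_step_def Let_def es tk G_def map_bind_pmf
      by (intro bind_pmf_cong) (auto simp: \<Phi>_def tk pmf.map_comp \<nu>_def o_def sl)
  qed
  have "map_pmf \<Phi> (esbas_iter env \<gamma> P \<Xi> (Suc n) H0)
      = bind_pmf (esbas_iter env \<gamma> P \<Xi> n H0) (\<lambda>H. G (\<Phi> H))"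
    by (simp add: map_bind_pmf stepeq cong: bind_pmf_cong)
  also have "\<dots> = bind_pmf (map_pmf \<Phi> (esbas_iter env \<gamma> P \<Xi> n H0)) G"
    by (simp add: bind_map_pmf)
  also have "\<dots> = bandit_run \<Xi> \<nu> (Suc n)" by (simp add: IH G_def)
  finally show ?case by (simp add: \<Phi>_def \<nu>_def s_def)
qed

lemma sum_shift_ivl:
  fixes s n :: nat and F :: "nat \<Rightarrow> 'b::comm_monoid_add"
  shows "(\<Sum>\<tau>\<in>{s+1..s+n}. F \<tau>) = (\<Sum>i<n. F (s + 1 + i)) "
  by (induction n) (auto simp: add.commute add.left_commute)

lemma sum_list_map_nth: "sum_list (map f xs) = (\<Sum>i<length xs. f (xs ! i))"
  by (simp add: sum_list_sum_nth atLeast0LessThan)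

lemma arm_gap_alg_gap:
  "arm_gap K (\<lambda>a. map_pmf (ret \<gamma>) (env (P a D))) = alg_gap env \<gamma> P K D"
  by (auto simp: arm_gap_def alg_gap_def arm_mean_def exp_ret_def)

lemma epoch_term:
  fixes H0 :: "(nat \<times> ('o, 'a) traj) list"
  assumes len: "length H0 = 2 ^ \<beta> - 1" and n: "n \<le> 2 ^ \<beta>" and m: "n \<le> m"
    and bdd: "\<And>D \<alpha>. \<bar>alg_gap env \<gamma> P K D \<alpha>\<bar> \<le> G2"
  shows "measure_pmf.expectation (esbas_iter env \<gamma> P \<Xi> m H0)
           (\<lambda>H. \<Sum>\<tau>\<in>{2 ^ \<beta> - 1 + 1..2 ^ \<beta> - 1 + n}.
                  alg_gap env \<gamma> P K (map snd (take (epoch_start \<tau>) H)) (fst (H ! (\<tau> - 1))))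
       = bandit_pseudo_regret \<Xi> K (\<lambda>a. map_pmf (ret \<gamma>) (env (P a (map snd H0)))) n"
proof -
  define s where "s = (2::nat) ^ \<beta> - 1"
  define \<Phi> where "\<Phi> = (\<lambda>H :: (nat \<times> ('o, 'a) traj) list. map (\<lambda>(a, e). (a, ret \<gamma> e)) (drop s H))"
  define \<nu> where "\<nu> = (\<lambda>a. map_pmf (ret \<gamma>) (env (P a (map snd H0))))"
  define S where "S = (\<lambda>H. \<Sum>\<tau>\<in>{s + 1..s + n}.
                  alg_gap env \<gamma> P K (map snd (take (epoch_start \<tau>) H)) (fst (H ! (\<tau> - 1))))"
  define g where "g = (\<lambda>h :: (nat \<times> real) list. \<Sum>(a, r)\<leftarrow>h. arm_gap K \<nu> a)"
  have pos: "(1::nat) \<le> 2 ^ \<beta>" by simp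
  have Sbdd: "\<bar>S H\<bar> \<le> real n * G2" for H
  proof -
    have "\<bar>S H\<bar> \<le> (\<Sum>\<tau>\<in>{s + 1..s + n}. \<bar>alg_gap env \<gamma> P K (map snd (take (epoch_start \<tau>) H)) (fst (H ! (\<tau> - 1)))\<bar>)"
      unfolding S_def by (rule sum_abs)
    also have "\<dots> \<le> real (card {s + 1..s + n}) * G2"
      by (rule sum_bounded_above) (rule bdd)
    finally show ?thesis by simp
  qed
  have Sext: "S (H @ Y) = S H" if "length H = s + n" for H Y
    unfolding S_def
  proof (rule sum.cong[OF refl])
    fix \<tau> assume \<tau>: "\<tau> \<in> {s + 1..s + n}"
    have t1: "2 ^ \<beta> \<le> \<tau>" "\<tau> < 2 * 2 ^ \<beta>" using \<tau> n pos unfolding s_def by (auto intro!: aux_lt)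
    have "epoch_start \<tau> = s" unfolding s_def using t1 by (rule epoch_start_eq)
    then show "alg_gap env \<gamma> P K (map snd (take (epoch_start \<tau>) (H @ Y))) (fst ((H @ Y) ! (\<tau> - 1))) =
               alg_gap env \<gamma> P K (map snd (take (epoch_start \<tau>) H)) (fst (H ! (\<tau> - 1)))"
      using \<tau> that by (auto simp: nth_append)
  qed
  have Sphi: "S H = g (\<Phi> H)" if H: "H \<in> set_pmf (esbas_iter env \<gamma> P \<Xi> n H0)" for H
  proof -
    obtain X where X: "H = H0 @ X" "length X = n" using set_esbas_iter[OF H] by auto
    have "S H = (\<Sum>i<n. alg_gap env \<gamma> P K (map snd H0) (fst (X ! i)))"
      unfolding S_def sum_shift_ivl
    proof (rule sum.cong[OF refl])
      fix i assume i: "i \<in> {..<n}"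
      have t1: "2 ^ \<beta> \<le> s + 1 + i" "s + 1 + i < 2 * 2 ^ \<beta>" using i n pos unfolding s_def by auto
      have "epoch_start (s + 1 + i) = s" unfolding s_def using t1 unfolding s_def by (rule epoch_start_eq)
      then show "alg_gap env \<gamma> P K (map snd (take (epoch_start (s + 1 + i)) H)) (fst (H ! (s + 1 + i - 1))) =
                 alg_gap env \<gamma> P K (map snd H0) (fst (X ! i))"
        using X len by (auto simp: nth_append s_def)
    qed
    also have "\<dots> = g (\<Phi> H)"
      unfolding g_def \<Phi>_def \<nu>_def arm_gap_alg_gap using X len
      by (simp add: s_def sum_list_map_nth case_prod_beta)
    finally show ?thesis .
  qed
  have "esbas_iter env \<gamma> P \<Xi> m H0 = bind_pmf (esbas_iter env \<gamma> P \<Xi> n H0) (esbas_iter env \<gamma> P \<Xi> (m - n))"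
    using esbas_iter_add[of env \<gamma> P \<Xi> n "m - n" H0] m by simp
  then have "measure_pmf.expectation (esbas_iter env \<gamma> P \<Xi> m H0) S
      = measure_pmf.expectation (esbas_iter env \<gamma> P \<Xi> n H0)
          (\<lambda>H. measure_pmf.expectation (esbas_iter env \<gamma> P \<Xi> (m - n) H) S)"
    using expectation_bind_pmf_bdd[OF Sbdd] by simp
  also have "\<dots> = measure_pmf.expectation (esbas_iter env \<gamma> P \<Xi> n H0) (\<lambda>H. g (\<Phi> H))"
  proof (rule integral_cong_AE)
    show "AE H in measure_pmf (esbas_iter env \<gamma> P \<Xi> n H0).
            measure_pmf.expectation (esbas_iter env \<gamma> P \<Xi> (m - n) H) S = g (\<Phi> H)"
      unfolding AE_measure_pmf_iff
    proof
      fix H assume H: "H \<in> set_pmf (esbas_iter env \<gamma> P \<Xi> n H0)"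
      obtain X where X: "H = H0 @ X" "length X = n" using set_esbas_iter[OF H] by auto
      have "measure_pmf.expectation (esbas_iter env \<gamma> P \<Xi> (m - n) H) S
          = measure_pmf.expectation (esbas_iter env \<gamma> P \<Xi> (m - n) H) (\<lambda>_. S H)"
      proof (rule integral_cong_AE)
        show "AE H' in measure_pmf (esbas_iter env \<gamma> P \<Xi> (m - n) H). S H' = S H"
          unfolding AE_measure_pmf_iff
        proof
          fix H' assume "H' \<in> set_pmf (esbas_iter env \<gamma> P \<Xi> (m - n) H)"
          then obtain Y where "H' = H @ Y" using set_esbas_iter by blast
          moreover have "length H = s + n" using X len by (simp add: s_def)
          ultimately show "S H' = S H" using Sext by simp
        qed
      qed auto
      also have "\<dots> = S H" by simp
      finally show "measure_pmf.expectation (esbas_iter env \<gamma> P \<Xi> (m - n) H) S = g (\<Phi> H)"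
        using Sphi[OF H] by simp
    qed
  qed auto
  also have "\<dots> = measure_pmf.expectation (map_pmf \<Phi> (esbas_iter env \<gamma> P \<Xi> n H0)) g"
    by simp
  also have "\<dots> = bandit_pseudo_regret \<Xi> K \<nu> n"
    unfolding \<Phi>_def s_def corr[OF len n] by (simp add: bandit_pseudo_regret_def g_def \<nu>_def)
  finally show ?thesis by (simp add: S_def s_def \<nu>_def)
qed

lemma floor_log_iff:
  assumes "0 < \<tau>"
  shows "floor_log \<tau> = \<beta> \<longleftrightarrow> 2 ^ \<beta> \<le> \<tau> \<and> \<tau> < 2 * 2 ^ \<beta>"
  using floor_log_eqI[of \<tau> \<beta>] floor_log_exp2_le[OF assms] floor_log_exp2_gt[of \<tau>] assms by auto

lemma epoch_set:
  assumes "\<beta> \<le> floor_log T" "1 \<le> T"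
  shows "{\<tau> \<in> {1..T}. floor_log \<tau> = \<beta>} = {2 ^ \<beta> - 1 + 1..2 ^ \<beta> - 1 + min (2 ^ \<beta>) (T + 1 - 2 ^ \<beta>)}"
    and "1 \<le> min (2 ^ \<beta>) (T + 1 - 2 ^ \<beta>)" "min (2 ^ \<beta>) (T + 1 - 2 ^ \<beta>) \<le> (2::nat) ^ \<beta>"
    and "2 ^ \<beta> - 1 \<le> T" "min (2 ^ \<beta>) (T + 1 - 2 ^ \<beta>) \<le> T - (2 ^ \<beta> - 1)"
proof -
  have p: "(1::nat) \<le> 2 ^ \<beta>" by simp
  have "(2::nat) ^ \<beta> \<le> 2 ^ floor_log T" using assms(1) by (intro power_increasing) auto
  also have "\<dots> \<le> T" using assms(2) by (intro floor_log_exp2_le) auto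
  finally have bT: "(2::nat) ^ \<beta> \<le> T" .
  show "{\<tau> \<in> {1..T}. floor_log \<tau> = \<beta>} = {2 ^ \<beta> - 1 + 1..2 ^ \<beta> - 1 + min (2 ^ \<beta>) (T + 1 - 2 ^ \<beta>)}"
  proof (intro set_eqI)
    fix x :: nat
    have ar: "\<And>p. 1 \<le> p \<Longrightarrow> p \<le> T \<Longrightarrow> (1 \<le> x \<and> x \<le> T \<and> p \<le> x \<and> x < 2 * p) \<longleftrightarrow>
               (p - 1 + 1 \<le> x \<and> x \<le> p - 1 + min p (T + 1 - p))" by auto
    have "x \<in> {\<tau> \<in> {1..T}. floor_log \<tau> = \<beta>} \<longleftrightarrow> (1 \<le> x \<and> x \<le> T \<and> 2 ^ \<beta> \<le> x \<and> x < 2 * 2 ^ \<beta>)"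
      using floor_log_iff[of x \<beta>] by auto
    then show "x \<in> {\<tau> \<in> {1..T}. floor_log \<tau> = \<beta>} \<longleftrightarrow> x \<in> {2 ^ \<beta> - 1 + 1..2 ^ \<beta> - 1 + min (2 ^ \<beta>) (T + 1 - 2 ^ \<beta>)}"
      using ar[OF p bT] by simp
  qed
  show "1 \<le> min (2 ^ \<beta>) (T + 1 - 2 ^ \<beta>)" "min (2 ^ \<beta>) (T + 1 - 2 ^ \<beta>) \<le> (2::nat) ^ \<beta>"
    "2 ^ \<beta> - 1 \<le> T" "min (2 ^ \<beta>) (T + 1 - 2 ^ \<beta>) \<le> T - (2 ^ \<beta> - 1)"
    using bT p by auto
qed

lemma regret_decomp:
  fixes env :: "'p \<Rightarrow> ('o, 'a) traj pmf"
  assumes bdd: "\<And>D \<alpha>. \<bar>alg_gap env \<gamma> P K D \<alpha>\<bar> \<le> G2"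
    and ep: "\<And>\<beta> n H0. 1 \<le> n \<Longrightarrow> n \<le> 2 ^ \<beta> \<Longrightarrow> H0 \<in> set_pmf (esbas_run env \<gamma> P \<Xi> (2 ^ \<beta> - 1)) \<Longrightarrow>
      0 \<le> bandit_pseudo_regret \<Xi> K (\<lambda>a. map_pmf (ret \<gamma>) (env (P a (map snd H0)))) n \<and>
      bandit_pseudo_regret \<Xi> K (\<lambda>a. map_pmf (ret \<gamma>) (env (P a (map snd H0)))) n \<le> Bd \<beta>"
    and T: "1 \<le> T"
  shows "0 \<le> esbas_ss_regret env \<gamma> P \<Xi> K T \<and> esbas_ss_regret env \<gamma> P \<Xi> K T \<le> (\<Sum>\<beta>\<le>floor_log T. Bd \<beta>)"
proof -
  define f where "f = (\<lambda>\<tau> H. alg_gap env \<gamma> P K (map snd (take (epoch_start \<tau>) H)) (fst (H ! (\<tau> - 1))))"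
  define S where "S = (\<lambda>\<beta> H. \<Sum>\<tau>\<in>{\<tau> \<in> {1..T}. floor_log \<tau> = \<beta>}. f \<tau> H)"
  have Sbdd: "\<bar>S \<beta> H\<bar> \<le> real T * G2" for \<beta> H
  proof -
    have "\<bar>S \<beta> H\<bar> \<le> (\<Sum>\<tau>\<in>{\<tau> \<in> {1..T}. floor_log \<tau> = \<beta>}. \<bar>f \<tau> H\<bar>)"
      unfolding S_def by (rule sum_abs)
    also have "\<dots> \<le> real (card {\<tau> \<in> {1..T}. floor_log \<tau> = \<beta>}) * G2"
      by (rule sum_bounded_above) (simp add: f_def bdd)
    also have "\<dots> \<le> real T * G2"
    proof -
      have "card {\<tau> \<in> {1..T}. floor_log \<tau> = \<beta>} \<le> card {1..T}" by (intro card_mono) auto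
      moreover have "0 \<le> G2" using bdd[of undefined undefined] by linarith
      ultimately show ?thesis by (intro mult_right_mono) auto
    qed
    finally show ?thesis .
  qed
  have "esbas_ss_regret env \<gamma> P \<Xi> K T = measure_pmf.expectation (esbas_run env \<gamma> P \<Xi> T) (\<lambda>H. \<Sum>\<beta>\<le>floor_log T. S \<beta> H)"
    unfolding esbas_ss_regret_def S_def f_def
    by (subst sum.group[where g=floor_log]) (auto intro: floor_log_le_iff)
  also have "\<dots> = (\<Sum>\<beta>\<le>floor_log T. measure_pmf.expectation (esbas_run env \<gamma> P \<Xi> T) (S \<beta>))"
    by (rule Bochner_Integration.integral_sum) (rule integrable_bdd[OF Sbdd])
  finally have eq: "esbas_ss_regret env \<gamma> P \<Xi> K T = (\<Sum>\<beta>\<le>floor_log T. measure_pmf.expectation (esbas_run env \<gamma> P \<Xi> T) (S \<beta>))" .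
  have each: "0 \<le> measure_pmf.expectation (esbas_run env \<gamma> P \<Xi> T) (S \<beta>) \<and>
              measure_pmf.expectation (esbas_run env \<gamma> P \<Xi> T) (S \<beta>) \<le> Bd \<beta>"
    if \<beta>: "\<beta> \<in> {..floor_log T}" for \<beta>
  proof -
    define s where "s = (2::nat) ^ \<beta> - 1"
    define n where "n = min ((2::nat) ^ \<beta>) (T + 1 - 2 ^ \<beta>)"
    have es: "{\<tau> \<in> {1..T}. floor_log \<tau> = \<beta>} = {2 ^ \<beta> - 1 + 1..2 ^ \<beta> - 1 + n}"
      "1 \<le> n" "n \<le> 2 ^ \<beta>" "s \<le> T" "n \<le> T - s"
      using epoch_set[of \<beta> T] \<beta> T by (auto simp: n_def s_def)
    have run: "esbas_run env \<gamma> P \<Xi> T = bind_pmf (esbas_run env \<gamma> P \<Xi> s) (esbas_iter env \<gamma> P \<Xi> (T - s))"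
      using esbas_run_add[of env \<gamma> P \<Xi> s "T - s"] es(4) by simp
    have "measure_pmf.expectation (esbas_run env \<gamma> P \<Xi> T) (S \<beta>)
        = measure_pmf.expectation (esbas_run env \<gamma> P \<Xi> s)
            (\<lambda>H0. measure_pmf.expectation (esbas_iter env \<gamma> P \<Xi> (T - s) H0) (S \<beta>))"
      unfolding run by (rule expectation_bind_pmf_bdd[OF Sbdd])
    also have "\<dots> = measure_pmf.expectation (esbas_run env \<gamma> P \<Xi> s)
            (\<lambda>H0. bandit_pseudo_regret \<Xi> K (\<lambda>a. map_pmf (ret \<gamma>) (env (P a (map snd H0)))) n)"
    proof (rule integral_cong_AE)
      show "AE H0 in measure_pmf (esbas_run env \<gamma> P \<Xi> s).
          measure_pmf.expectation (esbas_iter env \<gamma> P \<Xi> (T - s) H0) (S \<beta>) =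
          bandit_pseudo_regret \<Xi> K (\<lambda>a. map_pmf (ret \<gamma>) (env (P a (map snd H0)))) n"
        unfolding AE_measure_pmf_iff
      proof
        fix H0 assume "H0 \<in> set_pmf (esbas_run env \<gamma> P \<Xi> s)"
        then have len: "length H0 = 2 ^ \<beta> - 1" using set_esbas_run s_def by blast
        show "measure_pmf.expectation (esbas_iter env \<gamma> P \<Xi> (T - s) H0) (S \<beta>) =
          bandit_pseudo_regret \<Xi> K (\<lambda>a. map_pmf (ret \<gamma>) (env (P a (map snd H0)))) n"
          unfolding S_def es(1) f_def
          by (rule epoch_term[OF len es(3) es(5) bdd])
      qed
    qed auto
    finally have e2: "measure_pmf.expectation (esbas_run env \<gamma> P \<Xi> T) (S \<beta>) = \<dots>" .
    show ?thesis unfolding e2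
      by (rule exp_bounds) (use ep[OF es(2) es(3)] in \<open>auto simp: s_def\<close>)
  qed
  show ?thesis unfolding eq using each by (auto intro: sum_nonneg sum_mono)
qed

lemma floor_log_ln:
  assumes "1 \<le> T"
  shows "real (floor_log T) * ln 2 \<le> ln (real T)"
proof -
  have "(2::nat) ^ floor_log T \<le> T" using assms by (intro floor_log_exp2_le) auto
  then have "(2::real) ^ floor_log T \<le> real T" by (metis of_nat_le_iff of_nat_numeral of_nat_power)
  then have "ln ((2::real) ^ floor_log T) \<le> ln (real T)" by (intro ln_mono) auto
  then show ?thesis by (simp add: ln_realpow)
qed

theorem corollary1:
  fixes env :: "'p \<Rightarrow> ('o, 'a) traj pmf"
    and \<gamma> Rmin Rmax c c' \<Delta>inf :: real
    and K :: nat
    and P :: "nat \<Rightarrow> ('o, 'a) traj list \<Rightarrow> 'p"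
    and \<Xi> :: "(nat \<times> real) list \<Rightarrow> nat pmf"
  assumes gamma: "0 \<le> \<gamma>" "\<gamma> < 1"
    and rewards: "\<And>pol \<epsilon> o' a r. \<epsilon> \<in> set_pmf (env pol) \<Longrightarrow> (o', a, r) \<in> set \<epsilon> \<Longrightarrow>
                    Rmin \<le> r \<and> r \<le> Rmax"
    and K: "K \<ge> 1"
    and bandit: "log_regret_bandit K (max \<bar>Rmin\<bar> \<bar>Rmax\<bar> / (1 - \<gamma>)) \<Xi>"
    and Theta1: "0 < c" "\<And>\<beta>. AE D in measure_pmf (esbas_data env \<gamma> P \<Xi> (2 ^ \<beta> - 1)).
                   (\<exists>\<alpha><K. alg_gap env \<gamma> P K D \<alpha> \<noteq> 0) \<longrightarrow>
                   c \<le> alg_gap_dagger env \<gamma> P K D \<and> alg_gap_dagger env \<gamma> P K D \<le> c'"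
    and lim_pos: "\<Delta>inf > 0"
    and lim: "\<And>\<epsilon>. \<epsilon> > 0 \<Longrightarrow>
               (\<lambda>\<beta>. measure_pmf.prob (esbas_data env \<gamma> P \<Xi> (2 ^ \<beta> - 1))
                   {D. \<not> ((\<exists>\<alpha><K. alg_gap env \<gamma> P K D \<alpha> \<noteq> 0) \<and>
                           \<bar>alg_gap_dagger env \<gamma> P K D - \<Delta>inf\<bar> < \<epsilon>)}) \<longlonglongrightarrow> 0"
  shows "(\<lambda>T. esbas_ss_regret env \<gamma> P \<Xi> K T) \<in> O(\<lambda>T. (ln (real T))\<^sup>2 / \<Delta>inf)"
proof -
  from bandit obtain C where
    supp: "\<And>h. set_pmf (\<Xi> h) \<subseteq> {..<K}" and
    Cb: "\<And>\<nu>. (\<forall>a<K. set_pmf (\<nu> a) \<subseteq> {- (max \<bar>Rmin\<bar> \<bar>Rmax\<bar> / (1 - \<gamma>))..max \<bar>Rmin\<bar> \<bar>Rmax\<bar> / (1 - \<gamma>)}) \<Longrightarrow>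
            (\<exists>a<K. arm_gap K \<nu> a \<noteq> 0) \<Longrightarrow>
            (\<forall>T\<ge>2. bandit_pseudo_regret \<Xi> K \<nu> T \<le> C * ln (real T) / arm_gap_dagger K \<nu>)"
    unfolding log_regret_bandit_def by blast
  define B where "B = max \<bar>Rmin\<bar> \<bar>Rmax\<bar> / (1 - \<gamma>)"
  have B0: "0 \<le> B" unfolding B_def using gamma by auto
  have hret: "\<bar>ret \<gamma> \<epsilon>\<bar> \<le> B" if "\<epsilon> \<in> set_pmf (env pol)" for \<epsilon> pol
    unfolding B_def
  proof (rule ret_bound[OF gamma])
    show "0 \<le> max \<bar>Rmin\<bar> \<bar>Rmax\<bar>" by auto
    fix o' a r assume "(o', a, r) \<in> set \<epsilon>"
    from rewards[OF that this] show "\<bar>r\<bar> \<le> max \<bar>Rmin\<bar> \<bar>Rmax\<bar>" by auto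
  qed
  have hexp: "\<bar>exp_ret env \<gamma> pol\<bar> \<le> B" for pol
  proof -
    have "- B \<le> exp_ret env \<gamma> pol \<and> exp_ret env \<gamma> pol \<le> B"
      unfolding exp_ret_def by (rule exp_bounds) (use hret in force)
    then show ?thesis by auto
  qed
  have halg: "\<bar>alg_gap env \<gamma> P K D \<alpha>\<bar> \<le> 2 * B" for D \<alpha>
    using Max_abs_bound(1)[OF K, of "\<lambda>b. exp_ret env \<gamma> (P b D)", OF hexp] hexp[of "P \<alpha> D"]
    unfolding alg_gap_def by linarith
  have halg0: "0 \<le> alg_gap env \<gamma> P K D \<alpha>" if "\<alpha> < K" for D \<alpha>
    using Max_abs_bound(2)[OF K, of "\<lambda>b. exp_ret env \<gamma> (P b D)", OF hexp that]
    unfolding alg_gap_def by linarith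
  define A where "A = max C 0 * ln 2 / c"
  have A0: "0 \<le> A" unfolding A_def using Theta1(1) by auto
  have ep: "0 \<le> bandit_pseudo_regret \<Xi> K (\<lambda>a. map_pmf (ret \<gamma>) (env (P a (map snd H0)))) n \<and>
      bandit_pseudo_regret \<Xi> K (\<lambda>a. map_pmf (ret \<gamma>) (env (P a (map snd H0)))) n \<le> A * real \<beta> + 2 * B"
    if n1: "1 \<le> n" and n2: "n \<le> 2 ^ \<beta>" and H0: "H0 \<in> set_pmf (esbas_run env \<gamma> P \<Xi> (2 ^ \<beta> - 1))"
    for \<beta> n H0
  proof -
    define D0 where "D0 = map snd H0"
    define \<nu> where "\<nu> = (\<lambda>a. map_pmf (ret \<gamma>) (env (P a D0)))"
    have gapeq: "arm_gap K \<nu> = alg_gap env \<gamma> P K D0" unfolding \<nu>_def by (rule arm_gap_alg_gap)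
    have b1: "0 \<le> bandit_pseudo_regret \<Xi> K \<nu> n \<and> bandit_pseudo_regret \<Xi> K \<nu> n \<le> real n * (2 * B)"
      by (rule bpr_bounds[OF supp]) (use halg halg0 in \<open>auto simp: gapeq abs_le_iff\<close>)
    have "bandit_pseudo_regret \<Xi> K \<nu> n \<le> A * real \<beta> + 2 * B"
    proof (cases "\<exists>\<alpha><K. alg_gap env \<gamma> P K D0 \<alpha> \<noteq> 0")
      case False
      then have "bandit_pseudo_regret \<Xi> K \<nu> n = 0"
        by (intro bpr_zero[OF supp]) (auto simp: gapeq)
      then show ?thesis using A0 B0 by simp
    next
      case True
      have "AE D in measure_pmf (esbas_data env \<gamma> P \<Xi> (2 ^ \<beta> - 1)).
                   (\<exists>\<alpha><K. alg_gap env \<gamma> P K D \<alpha> \<noteq> 0) \<longrightarrow>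
                   c \<le> alg_gap_dagger env \<gamma> P K D \<and> alg_gap_dagger env \<gamma> P K D \<le> c'"
        by (rule Theta1(2))
      then have "c \<le> alg_gap_dagger env \<gamma> P K D0"
        using H0 True unfolding AE_measure_pmf_iff esbas_data_def D0_def by auto
      moreover have dageq: "arm_gap_dagger K \<nu> = alg_gap_dagger env \<gamma> P K D0"
        unfolding arm_gap_dagger_def alg_gap_dagger_def gapeq ..
      ultimately have cg: "c \<le> arm_gap_dagger K \<nu>" by simp
      show ?thesis
      proof (cases "n = 1")
        case True
        have "0 \<le> A * real \<beta>" using A0 by simp
        then show ?thesis using b1 True by simp
      next
        case False
        then have n2': "n \<ge> 2" using n1 by auto
        have sup\<nu>: "\<forall>a<K. set_pmf (\<nu> a) \<subseteq> {- B..B}"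
          using hret by (fastforce simp: \<nu>_def abs_le_iff)
        have "\<exists>a<K. arm_gap K \<nu> a \<noteq> 0" using True by (simp add: gapeq)
        from Cb[OF sup\<nu>[unfolded B_def] this] n2'
        have "bandit_pseudo_regret \<Xi> K \<nu> n \<le> C * ln (real n) / arm_gap_dagger K \<nu>" by auto
        also have "\<dots> \<le> max C 0 * ln (real n) / arm_gap_dagger K \<nu>"
          using cg Theta1(1) n1 by (intro divide_right_mono mult_right_mono) auto
        also have "\<dots> \<le> max C 0 * ln (real n) / c"
          using cg Theta1(1) n1 by (intro divide_left_mono mult_nonneg_nonneg mult_pos_pos) auto
        also have "\<dots> \<le> max C 0 * (real \<beta> * ln 2) / c"
        proof -
          have "real n \<le> 2 ^ \<beta>" using n2 by (metis of_nat_le_iff of_nat_numeral of_nat_power)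
          then have "ln (real n) \<le> ln ((2::real) ^ \<beta>)" using n1 by (intro ln_mono) auto
          then have "ln (real n) \<le> real \<beta> * ln 2" by (simp add: ln_realpow)
          then show ?thesis using Theta1(1) by (intro divide_right_mono mult_left_mono) auto
        qed
        also have "\<dots> = A * real \<beta>" unfolding A_def by simp
        finally show ?thesis using B0 by simp
      qed
    qed
    then show ?thesis using b1 by (simp add: \<nu>_def D0_def)
  qed
  have main: "0 \<le> esbas_ss_regret env \<gamma> P \<Xi> K T \<and>
      esbas_ss_regret env \<gamma> P \<Xi> K T \<le> (\<Sum>\<beta>\<le>floor_log T. A * real \<beta> + 2 * B)" if "1 \<le> T" for T
    by (rule regret_decomp[OF halg ep that])
  define c0 where "c0 = 2 * (A + 2 * B) / (ln 2)^2 * \<Delta>inf"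
  show ?thesis
  proof (rule bigoI[where c=c0])
    show "\<forall>\<^sub>F T in at_top. norm (esbas_ss_regret env \<gamma> P \<Xi> K T) \<le> c0 * norm ((ln (real T))\<^sup>2 / \<Delta>inf)"
      using eventually_ge_at_top[of "2::nat"]
    proof eventually_elim
      case (elim T)
      define L where "L = floor_log T"
      have L1: "1 \<le> L" unfolding L_def using floor_log_le_iff[OF elim] by (simp add: floor_log_rec)
      have LT: "real L * ln 2 \<le> ln (real T)" unfolding L_def by (rule floor_log_ln) (use elim in auto)
      have m: "0 \<le> esbas_ss_regret env \<gamma> P \<Xi> K T \<and>
         esbas_ss_regret env \<gamma> P \<Xi> K T \<le> (\<Sum>\<beta>\<le>L. A * real \<beta> + 2 * B)"
        using main[of T] elim unfolding L_def by auto
      have "(\<Sum>\<beta>\<le>L. A * real \<beta> + 2 * B) \<le> real (card {..L}) * (A * real L + 2 * B)"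
        by (rule sum_bounded_above) (use A0 in \<open>auto intro: mult_left_mono\<close>)
      also have "\<dots> \<le> (2 * real L) * ((A + 2 * B) * real L)"
      proof -
        have "B \<le> B * real L" using L1 B0 mult_left_mono[of 1 "real L" B] by simp
        then show ?thesis using L1 A0 B0 by (intro mult_mono) (auto simp: algebra_simps)
      qed
      also have "\<dots> = 2 * (A + 2 * B) * (real L)^2" by (simp add: power2_eq_square)
      also have "\<dots> \<le> 2 * (A + 2 * B) * (ln (real T) / ln 2)^2"
      proof -
        have "real L \<le> ln (real T) / ln 2" using LT by (simp add: field_simps)
        then show ?thesis using A0 B0 by (intro mult_left_mono power_mono) auto
      qed
      also have "\<dots> = c0 * ((ln (real T))\<^sup>2 / \<Delta>inf)"
        unfolding c0_def using lim_pos by (simp add: power_divide)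
      also have "\<dots> = c0 * norm ((ln (real T))\<^sup>2 / \<Delta>inf)"
        using lim_pos by simp
      finally show ?case using m by simp
    qed
  qed
qed

end
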